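(* Let $n\in\mathbb{N}$ and $a_0,a_1,a_2\in\mathbb{R}$ with $a_0\neq0$, and suppose the roots $\lambda_1,\lambda_2$ of $a_0\lambda^2+a_1\lambda+a_2=0$ are real and nonzero. Then the equation $a_0\bm{x}''+a_1\bm{x}'+a_2\bm{x}=\bm{0}$ is Ulam stable on $\mathbb{R}$, and its minimum Ulam constant is $\dfrac{1}{|a_0\lambda_1\lambda_2|}$.
   Context: $\|\cdot\|$ is a norm on $\mathbb{C}^n$. Ulam stability: the equation $\alpha(t)\bm{x}''+\beta(t)\bm{x}'+\gamma(t)\bm{x}=\bm{f}(t)$ is Ulam stable on $I$ if there exists a constant $L>0$ such that for every $\varepsilon>0$ and every $\bm{\xi}\in C^2(I,\mathbb{C}^n)$ with $\sup_{t\in I}\|\alpha(t)\bm{\xi}''(t)+\beta(t)\bm{\xi}'(t)+\gamma(t)\bm{\xi}(t)-\bm{f}(t)\|\le\varepsilon$, there exists a solution $\bm{x}\in C^2(I,\mathbb{C}^n)$ of the equation with $\sup_{t\in I}\|\bm{\xi}(t)-\bm{x}(t)\|\le L\varepsilon$; such an $L$ is called an Ulam constant for the equation on $I$. The minimum Ulam constant is an Ulam constant $B$ such that no $L<B$ is an Ulam constant. *)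

theory Defs
  imports "HOL-Analysis.Analysis"
begin

definition is_norm_on :: "(complex ^ 'n \<Rightarrow> real) \<Rightarrow> bool" where
  "is_norm_on N \<longleftrightarrow>
     (\<forall>x. 0 \<le> N x) \<and> (\<forall>x. N x = 0 \<longleftrightarrow> x = 0) \<and>
     (\<forall>c x. N (c *s x) = cmod c * N x) \<and> (\<forall>x y. N (x + y) \<le> N x + N y)"

definition C2_on :: "real set \<Rightarrow> (real \<Rightarrow> complex ^ 'n) \<Rightarrow> (real \<Rightarrow> complex ^ 'n)
     \<Rightarrow> (real \<Rightarrow> complex ^ 'n) \<Rightarrow> bool" where
  "C2_on I x x1 x2 \<longleftrightarrow>
     (\<forall>t\<in>I. (x has_vector_derivative x1 t) (at t within I)) \<and>
     (\<forall>t\<in>I. (x1 has_vector_derivative x2 t) (at t within I)) \<and>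
     continuous_on I x2"

definition is_ulam_constant ::
  "(complex ^ 'n \<Rightarrow> real) \<Rightarrow> (real \<Rightarrow> complex) \<Rightarrow> (real \<Rightarrow> complex) \<Rightarrow> (real \<Rightarrow> complex)
   \<Rightarrow> (real \<Rightarrow> complex ^ 'n) \<Rightarrow> real set \<Rightarrow> real \<Rightarrow> bool" where
  "is_ulam_constant N \<alpha> \<beta> \<gamma> f I L \<longleftrightarrow> L > 0 \<and>
     (\<forall>\<epsilon>>0. \<forall>\<xi> \<xi>1 \<xi>2. C2_on I \<xi> \<xi>1 \<xi>2 \<and>
        (\<forall>t\<in>I. N (\<alpha> t *s \<xi>2 t + \<beta> t *s \<xi>1 t + \<gamma> t *s \<xi> t - f t) \<le> \<epsilon>) \<longrightarrow>
        (\<exists>x x1 x2. C2_on I x x1 x2 \<and>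
           (\<forall>t\<in>I. \<alpha> t *s x2 t + \<beta> t *s x1 t + \<gamma> t *s x t = f t) \<and>
           (\<forall>t\<in>I. N (\<xi> t - x t) \<le> L * \<epsilon>)))"

definition ulam_stable ::
  "(complex ^ 'n \<Rightarrow> real) \<Rightarrow> (real \<Rightarrow> complex) \<Rightarrow> (real \<Rightarrow> complex) \<Rightarrow> (real \<Rightarrow> complex)
   \<Rightarrow> (real \<Rightarrow> complex ^ 'n) \<Rightarrow> real set \<Rightarrow> bool" where
  "ulam_stable N \<alpha> \<beta> \<gamma> f I \<longleftrightarrow> (\<exists>L. is_ulam_constant N \<alpha> \<beta> \<gamma> f I L)"

definition is_min_ulam_constant ::
  "(complex ^ 'n \<Rightarrow> real) \<Rightarrow> (real \<Rightarrow> complex) \<Rightarrow> (real \<Rightarrow> complex) \<Rightarrow> (real \<Rightarrow> complex)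
   \<Rightarrow> (real \<Rightarrow> complex ^ 'n) \<Rightarrow> real set \<Rightarrow> real \<Rightarrow> bool" where
  "is_min_ulam_constant N \<alpha> \<beta> \<gamma> f I B \<longleftrightarrow>
     is_ulam_constant N \<alpha> \<beta> \<gamma> f I B \<and> (\<forall>L<B. \<not> is_ulam_constant N \<alpha> \<beta> \<gamma> f I L)"

end

theory Submission
  imports Defs
begin


lemma smul_real: "complex_of_real r *s (v::complex^'n) = r *\<^sub>R v"
proof (rule iffD2[OF vec_eq_iff], rule allI)
  fix i have "(r *\<^sub>R v)$i = r *\<^sub>R (v$i)" by simp
  also have "\<dots> = of_real r * v$i" by (rule scaleR_conv_of_real)
  finally have "(r *\<^sub>R v)$i = of_real r * v$i" .
  then show "(complex_of_real r *s v) $ i = (r *\<^sub>R v) $ i" by simp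
qed

lemma N_scaleR: "is_norm_on N \<Longrightarrow> N (r *\<^sub>R x) = \<bar>r\<bar> * N x"
  unfolding is_norm_on_def by (metis smul_real norm_of_real)

lemma N_minus: "is_norm_on N \<Longrightarrow> N (- x) = N x"
  using N_scaleR[of N "-1" x] by simp

lemma N_commute: "is_norm_on N \<Longrightarrow> N (x - y) = N (y - x)"
  by (metis N_minus minus_diff_eq)

lemma N_tri: "is_norm_on N \<Longrightarrow> N (x + y) \<le> N x + N y"
  unfolding is_norm_on_def by blast

lemma N_nonneg: "is_norm_on N \<Longrightarrow> 0 \<le> N x"
  unfolding is_norm_on_def by blast

lemma N_zero: "is_norm_on N \<Longrightarrow> N x = 0 \<longleftrightarrow> x = 0"
  unfolding is_norm_on_def by blast

lemma N_diff_tri: "is_norm_on N \<Longrightarrow> N (x - z) \<le> N (x - y) + N (y - z)"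
  using N_tri[of N "x - y" "y - z"] by simp

lemma N_rev: "is_norm_on N \<Longrightarrow> N x - N y \<le> N (x - y)"
  using N_tri[of N "x - y" y] by simp

lemma N_convex: "is_norm_on N \<Longrightarrow> convex_on UNIV N"
proof (rule convex_onI)
  fix t :: real and x y assume N: "is_norm_on N" and t: "0 < t" "t < 1"
  have "N ((1 - t) *\<^sub>R x + t *\<^sub>R y) \<le> N ((1 - t) *\<^sub>R x) + N (t *\<^sub>R y)" using N_tri[OF N] .
  also have "\<dots> = (1 - t) * N x + t * N y" using N_scaleR[OF N] t by simp
  finally show "N ((1 - t) *\<^sub>R x + t *\<^sub>R y) \<le> (1 - t) * N x + t * N y" .
qed auto

lemma N_cont: "is_norm_on N \<Longrightarrow> continuous_on UNIV N"
  by (rule convex_on_continuous) (auto intro: N_convex)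

lemma N_lower: assumes N: "is_norm_on (N::complex^'n \<Rightarrow> real)"
  shows "\<exists>m>0. \<forall>x. m * norm x \<le> N x"
proof -
  have "\<exists>x\<in>sphere 0 1. \<forall>y\<in>sphere 0 1. N x \<le> N (y::complex^'n)"
    by (rule continuous_attains_inf) (auto intro: continuous_on_subset[OF N_cont[OF N]])
  then obtain x0 where x0: "norm x0 = 1" "\<And>y. norm y = 1 \<Longrightarrow> N x0 \<le> N y" by auto
  have pos: "N x0 > 0" using x0 N_zero[OF N, of x0] N_nonneg[OF N, of x0] by auto
  have "N x0 * norm x \<le> N x" for x
  proof (cases "x = 0")
    case False
    have "N x0 \<le> N ((1/norm x) *\<^sub>R x)" by (rule x0(2)) (use False in simp)
    also have "\<dots> = N x / norm x" using N_scaleR[OF N] by simp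
    finally show ?thesis using False by (simp add: field_simps)
  qed (use N_zero[OF N] N_nonneg[OF N] in simp)
  with pos show ?thesis by blast
qed

lemma N_mvt:
  fixes f f' :: "real \<Rightarrow> complex^'n"
  assumes N: "is_norm_on N"
    and f: "\<And>s. (f has_vector_derivative f' s) (at s)"
    and h: "\<And>s. (h has_real_derivative h' s) (at s)"
    and bd: "\<And>s. N (f' s) \<le> h' s" and ab: "a \<le> b"
  shows "N (f b - f a) \<le> h b - h a"
proof -
  have M0: "h a \<le> h b"
  proof (rule DERIV_nonneg_imp_nondecreasing[OF ab])
    fix x show "\<exists>y. (h has_real_derivative y) (at x) \<and> 0 \<le> y"
      using h[of x] order_trans[OF N_nonneg[OF N] bd[of x]] by blast
  qed
  have "N (f b - f a) \<le> h b - h a + e" if e: "e > 0" for e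
  proof (rule ccontr)
    define R where "R = h b - h a + e"
    have R: "R > 0" using M0 e by (simp add: R_def)
    assume "\<not> ?thesis"
    hence zK: "f b - f a \<notin> {x. N x \<le> R}" by (simp add: R_def)
    have cK: "convex {x. N x \<le> R}"
    proof (rule convexI)
      fix x y :: "complex^'n" and u v :: real
      assume "x \<in> {x. N x \<le> R}" "y \<in> {x. N x \<le> R}" "0 \<le> u" "0 \<le> v" "u + v = 1"
      hence "N (u *\<^sub>R x + v *\<^sub>R y) \<le> u * N x + v * N y"
        using N_tri[OF N, of "u *\<^sub>R x" "v *\<^sub>R y"] N_scaleR[OF N] by simp
      also have "\<dots> \<le> u * R + v * R"
        using \<open>x \<in> _\<close> \<open>y \<in> _\<close> \<open>0 \<le> u\<close> \<open>0 \<le> v\<close> by (intro add_mono mult_left_mono) auto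
      also have "\<dots> = R" using \<open>u + v = 1\<close> by (metis distrib_right mult_1)
      finally show "u *\<^sub>R x + v *\<^sub>R y \<in> {x. N x \<le> R}" by simp
    qed
    have clK: "closed {x. N x \<le> R}"
      by (rule closed_Collect_le[OF N_cont[OF N] continuous_on_const])
    obtain w \<beta> where w: "inner w (f b - f a) < \<beta>" "\<And>x. N x \<le> R \<Longrightarrow> inner w x > \<beta>"
      using separating_hyperplane_closed_point[OF cK clK zK] by blast
    have "N 0 \<le> R" using R N_zero[OF N, of 0] by simp
    hence "\<beta> < inner w 0" by (rule w(2))
    hence b0: "\<beta> < 0" by simp
    define k where "k = - \<beta> / R"
    have k: "k > 0" using b0 R by (simp add: k_def divide_neg_pos)
    have key: "- inner w y \<le> k * N y" for y
    proof (cases "y = 0")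
      case False
      have "N y \<noteq> 0" using N_zero[OF N, of y] False by simp
      hence Ny: "N y > 0" using N_nonneg[OF N, of y] by linarith
      have "N ((R / N y) *\<^sub>R y) \<le> R" using N_scaleR[OF N] Ny R by simp
      hence "inner w ((R / N y) *\<^sub>R y) > \<beta>" by (rule w(2))
      hence "(R / N y) * inner w y > \<beta>" by simp
      hence "R * inner w y > \<beta> * N y" using Ny by (simp add: field_simps)
      thus ?thesis using R by (simp add: k_def field_simps)
    qed (use N_zero[OF N, of 0] in simp)
    have "(\<lambda>s. - inner w (f s) - k * h s) b \<le> (\<lambda>s. - inner w (f s) - k * h s) a"
    proof (rule DERIV_nonpos_imp_nonincreasing[OF ab])
      fix x
      have d1: "((\<lambda>s. inner w (f s)) has_real_derivative inner w (f' x)) (at x)"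
        unfolding has_real_derivative_iff_has_vector_derivative
        by (rule bounded_linear.has_vector_derivative[OF bounded_linear_inner_right f])
      have "((\<lambda>s. - inner w (f s) - k * h s) has_real_derivative (- inner w (f' x) - k * h' x)) (at x)"
        by (rule DERIV_diff[OF DERIV_minus[OF d1] DERIV_cmult[OF h]])
      moreover have "- inner w (f' x) - k * h' x \<le> 0"
        using key[of "f' x"] mult_left_mono[OF bd[of x], of k] k by linarith
      ultimately show "\<exists>y. ((\<lambda>s. - inner w (f s) - k * h s) has_real_derivative y) (at x) \<and> y \<le> 0" by blast
    qed
    hence "- inner w (f b - f a) \<le> k * (h b - h a)" by (simp add: inner_diff_right algebra_simps)
    moreover have "k * R = - \<beta>" using R by (simp add: k_def)
    moreover have "k * R = k * (h b - h a) + k * e" by (simp add: R_def distrib_left)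
    moreover have "k * e > 0" using k e by simp
    ultimately show False using w(1) by linarith
  qed
  thus ?thesis by (rule field_le_epsilon)
qed



lemma N_isCont: "is_norm_on N \<Longrightarrow> isCont N x"
  using N_cont[of N] by (simp add: continuous_on_eq_continuous_at)

lemma first_order:
  fixes u u' :: "real \<Rightarrow> complex^'n"
  assumes N: "is_norm_on N" and l: "l \<noteq> 0"
    and du: "\<And>t. (u has_vector_derivative u' t) (at t)"
    and bd: "\<And>t. N (u' t - l *\<^sub>R u t) \<le> d"
  shows "\<exists>c. \<forall>t. N (u t - exp (l * t) *\<^sub>R c) \<le> d / \<bar>l\<bar>"
proof -
  have d0: "d \<ge> 0" using bd[of 0] N_nonneg[OF N] order_trans by blast
  define v where "v t = exp (- l * t) *\<^sub>R u t" for t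
  have dv: "(v has_vector_derivative exp (- l * t) *\<^sub>R (u' t - l *\<^sub>R u t)) (at t)" for t
  proof -
    have e: "((\<lambda>t. exp (- l * t)) has_real_derivative exp (- l * t) * (- l)) (at t)"
      by (auto intro!: derivative_eq_intros)
    have "(v has_vector_derivative (exp (- l * t) *\<^sub>R u' t + (exp (- l * t) * (- l)) *\<^sub>R u t)) (at t)"
      unfolding v_def by (rule has_vector_derivative_scaleR[OF e du])
    moreover have "exp (- l * t) *\<^sub>R u' t + (exp (- l * t) * (- l)) *\<^sub>R u t = exp (- l * t) *\<^sub>R (u' t - l *\<^sub>R u t)"
      by (simp add: scaleR_diff_right)
    ultimately show ?thesis by simp
  qed
  define h where "h t = - (d / l) * exp (- l * t)" for t
  have dh: "(h has_real_derivative d * exp (- l * t)) (at t)" for t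
    unfolding h_def using l by (auto intro!: derivative_eq_intros)
  have bv: "N (exp (- l * t) *\<^sub>R (u' t - l *\<^sub>R u t)) \<le> d * exp (- l * t)" for t
    using N_scaleR[OF N] bd[of t] by (simp add: mult.commute)
  have mvt: "N (v b - v a) \<le> h b - h a" if "a \<le> b" for a b
    by (rule N_mvt[OF N dv dh bv that])
  have P: "N (v s - v t) \<le> d / \<bar>l\<bar> * exp (- l * t)" if "l > 0 \<and> t \<le> s \<or> l < 0 \<and> s \<le> t" for s t
    using that
  proof
    assume a: "l > 0 \<and> t \<le> s"
    have "N (v s - v t) \<le> h s - h t" using mvt a by simp
    also have "\<dots> = d / l * exp (- l * t) - d / l * exp (- l * s)" by (simp add: h_def)
    also have "\<dots> \<le> d / \<bar>l\<bar> * exp (- l * t)" using a d0 by simp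
    finally show ?thesis .
  next
    assume a: "l < 0 \<and> s \<le> t"
    have "N (v s - v t) = N (v t - v s)" by (rule N_commute[OF N])
    also have "\<dots> \<le> h t - h s" using mvt a by simp
    also have "\<dots> = d / \<bar>l\<bar> * exp (- l * t) - d / \<bar>l\<bar> * exp (- l * s)" using a by (simp add: h_def)
    also have "\<dots> \<le> d / \<bar>l\<bar> * exp (- l * t)"
      using d0 divide_nonneg_nonneg[OF d0 abs_ge_zero[of l]] mult_nonneg_nonneg[of "d / \<bar>l\<bar>" "exp (- l * s)"] by simp
    finally show ?thesis .
  qed
  define \<sigma> where "\<sigma> = sgn l"
  have sl: "l * \<sigma> = \<bar>l\<bar>" by (simp add: \<sigma>_def abs_sgn mult.commute)
  have P2: "N (v (\<sigma> * real n) - v t) \<le> d / \<bar>l\<bar> * exp (- l * t)" if "real n \<ge> \<bar>t\<bar>" for n t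
    using that l by (intro P) (auto simp: \<sigma>_def sgn_if)
  obtain mm where mm: "mm > 0" "\<And>x. mm * norm x \<le> N x" using N_lower[OF N] by blast
  define X where "X n = v (\<sigma> * real n)" for n
  have "Cauchy X"
  proof (rule metric_CauchyI)
    fix e :: real assume e: "e > 0"
    define C where "C = 2 * (d / \<bar>l\<bar>) / mm"
    have C0: "C \<ge> 0" using d0 mm by (simp add: C_def)
    obtain M :: nat where M: "real M > C / (e * \<bar>l\<bar>)" using reals_Archimedean2 by blast
    have "C * exp (- \<bar>l\<bar> * real M) < e"
    proof -
      have "C / (e * \<bar>l\<bar>) * (e * \<bar>l\<bar>) < real M * (e * \<bar>l\<bar>)"
        using M e l by (intro mult_strict_right_mono) auto
      hence "C < \<bar>l\<bar> * real M * e" using e l by (simp add: field_simps)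
      also have "\<dots> < exp (\<bar>l\<bar> * real M) * e"
        using e exp_ge_add_one_self[of "\<bar>l\<bar> * real M"] by (intro mult_strict_right_mono) linarith+
      finally have "C < exp (\<bar>l\<bar> * real M) * e" .
      thus ?thesis by (simp add: exp_minus field_simps)
    qed
    moreover have "dist (X m) (X n) \<le> C * exp (- \<bar>l\<bar> * real M)" if "m \<ge> M" "n \<ge> M" for m n
    proof -
      have "N (X m - X n) \<le> N (X m - v (\<sigma> * real M)) + N (v (\<sigma> * real M) - X n)"
        by (rule N_diff_tri[OF N])
      also have "\<dots> = N (X m - v (\<sigma> * real M)) + N (X n - v (\<sigma> * real M))"
        using N_commute[OF N] by simp
      also have "\<dots> \<le> d / \<bar>l\<bar> * exp (- l * (\<sigma> * real M)) + d / \<bar>l\<bar> * exp (- l * (\<sigma> * real M))"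
        unfolding X_def using that l by (intro add_mono P2) (auto simp: \<sigma>_def abs_mult sgn_if)
      also have "\<dots> = mm * (C * exp (- \<bar>l\<bar> * real M))"
      proof -
        have "- l * (\<sigma> * real M) = - (l * \<sigma>) * real M" by simp
        hence E: "exp (- l * (\<sigma> * real M)) = exp (- \<bar>l\<bar> * real M)" using sl by simp
        show ?thesis unfolding E C_def using mm(1) by simp
      qed
      finally have "mm * norm (X m - X n) \<le> mm * (C * exp (- \<bar>l\<bar> * real M))"
        using mm(2) order_trans by blast
      thus ?thesis using mm by (simp add: dist_norm)
    qed
    ultimately show "\<exists>M. \<forall>m\<ge>M. \<forall>n\<ge>M. dist (X m) (X n) < e" by (meson le_less_trans)
  qed
  then obtain c where Xc: "X \<longlonglongrightarrow> c" using Cauchy_convergent_iff convergent_def by blast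
  have cb: "N (c - v t) \<le> d / \<bar>l\<bar> * exp (- l * t)" for t
  proof (rule LIMSEQ_le_const2)
    show "(\<lambda>n. N (X n - v t)) \<longlonglongrightarrow> N (c - v t)"
      by (rule isCont_tendsto_compose[OF N_isCont[OF N]]) (intro tendsto_intros Xc)
    obtain n0 :: nat where "real n0 \<ge> \<bar>t\<bar>" using real_arch_simple by blast
    thus "\<exists>n0. \<forall>n\<ge>n0. N (X n - v t) \<le> d / \<bar>l\<bar> * exp (- l * t)"
      unfolding X_def by (intro exI[of _ n0] allI impI P2) auto
  qed
  show ?thesis
  proof (intro exI allI)
    fix t
    have "u t - exp (l * t) *\<^sub>R c = exp (l * t) *\<^sub>R (v t - c)"
      by (simp add: v_def scaleR_diff_right exp_minus_inverse exp_add[symmetric])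
    hence "N (u t - exp (l * t) *\<^sub>R c) = exp (l * t) * N (c - v t)"
      using N_scaleR[OF N] N_commute[OF N] by simp
    also have "\<dots> \<le> exp (l * t) * (d / \<bar>l\<bar> * exp (- l * t))"
      using cb by (intro mult_left_mono) auto
    also have "\<dots> = d / \<bar>l\<bar>" by (simp add: exp_minus field_simps)
    finally show "N (u t - exp (l * t) *\<^sub>R c) \<le> d / \<bar>l\<bar>" .
  qed
qed



lemma coeffs:
  fixes a0 a1 a2 l1 l2 :: real
  assumes "\<forall>z::complex. of_real a0 * z^2 + of_real a1 * z + of_real a2
                      = of_real a0 * (z - of_real l1) * (z - of_real l2)"
  shows "a2 = a0 * l1 * l2" "a1 = - a0 * (l1 + l2)"
proof -
  have "complex_of_real a2 = of_real (a0 * l1 * l2)" using assms[rule_format, of 0] by simp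
  thus A: "a2 = a0 * l1 * l2" using of_real_eq_iff by blast
  have "complex_of_real (a0 + a1 + a2) = of_real (a0 * (1 - l1) * (1 - l2))" using assms[rule_format, of 1] by simp
  hence "a0 + a1 + a2 = a0 * (1 - l1) * (1 - l2)" using of_real_eq_iff by blast
  thus "a1 = - a0 * (l1 + l2)" using A by (simp add: algebra_simps)
qed

lemma expo_unique:
  fixes y :: "real \<Rightarrow> 'a::real_normed_vector"
  assumes dy: "\<And>t. (y has_vector_derivative l *\<^sub>R y t) (at t)"
  shows "y t = exp (l * t) *\<^sub>R y 0"
proof -
  define g where "g t = exp (- l * t) *\<^sub>R y t" for t
  have "(g has_vector_derivative 0) (at t within UNIV)" for t
  proof -
    have e: "((\<lambda>t. exp (- l * t)) has_real_derivative exp (- l * t) * (- l)) (at t)"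
      by (auto intro!: derivative_eq_intros)
    have "(g has_vector_derivative (exp (- l * t) *\<^sub>R (l *\<^sub>R y t) + (exp (- l * t) * (- l)) *\<^sub>R y t)) (at t)"
      unfolding g_def by (rule has_vector_derivative_scaleR[OF e dy])
    moreover have "exp (- l * t) *\<^sub>R (l *\<^sub>R y t) + (exp (- l * t) * (- l)) *\<^sub>R y t = 0"
      by (simp add: algebra_simps)
    ultimately show ?thesis by simp
  qed
  then obtain c where c: "\<And>t. g t = c" using has_vector_derivative_zero_constant[of UNIV g] by auto
  have "exp (l * t) * exp (- l * t) = 1" by (simp add: exp_add[symmetric])
  hence "y t = exp (l * t) *\<^sub>R g t" by (simp add: g_def)
  also have "\<dots> = exp (l * t) *\<^sub>R g 0" using c by simp
  also have "g 0 = y 0" by (simp add: g_def)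
  finally show ?thesis .
qed

lemma small_exp:
  fixes l K \<eta> :: real
  assumes "l \<noteq> 0" "K \<ge> 0" "\<eta> > 0"
  shows "\<exists>T\<ge>0. \<forall>s\<ge>T. exp (- \<bar>l\<bar> * s) * K < \<eta>"
proof (intro exI[of _ "K / (\<eta> * \<bar>l\<bar>)"] conjI allI impI)
  show "K / (\<eta> * \<bar>l\<bar>) \<ge> 0" using assms by simp
  fix s assume s: "K / (\<eta> * \<bar>l\<bar>) \<le> s"
  have "K / \<eta> \<le> \<bar>l\<bar> * s" using s assms by (simp add: field_simps)
  also have "\<dots> < exp (\<bar>l\<bar> * s)" using exp_ge_add_one_self[of "\<bar>l\<bar> * s"] by linarith
  finally have "K < \<eta> * exp (\<bar>l\<bar> * s)" using assms by (simp add: field_simps)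
  thus "exp (- \<bar>l\<bar> * s) * K < \<eta>" by (simp add: exp_minus field_simps)
qed


lemma phi_exists:
  fixes l1 l2 :: real
  shows "\<exists>\<phi> \<phi>1 \<phi>2. (\<forall>t. (\<phi> has_real_derivative \<phi>1 t) (at t)) \<and> (\<forall>t. (\<phi>1 has_real_derivative \<phi>2 t) (at t))
     \<and> continuous_on UNIV \<phi>2 \<and> (\<forall>t. \<phi>1 t = l2 * \<phi> t + exp (l1 * t))
     \<and> (\<forall>t. \<phi>2 t = l2 * \<phi>1 t + l1 * exp (l1 * t))"
proof (cases "l1 = l2")
  case True
  have d1: "((\<lambda>t. t * exp (l1 * t)) has_real_derivative (exp (l1 * t) + l1 * t * exp (l1 * t))) (at t)" for t
    by (auto intro!: derivative_eq_intros simp: algebra_simps)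
  have d2: "((\<lambda>t. exp (l1 * t) + l1 * t * exp (l1 * t)) has_real_derivative (2 * l1 * exp (l1 * t) + l1 * l1 * t * exp (l1 * t))) (at t)" for t
    by (auto intro!: derivative_eq_intros simp: algebra_simps)
  have c: "continuous_on UNIV (\<lambda>t. 2 * l1 * exp (l1 * t) + l1 * l1 * t * exp (l1 * t))"
    by (intro continuous_intros)
  have e1: "exp (l1 * t) + l1 * t * exp (l1 * t) = l2 * (t * exp (l1 * t)) + exp (l1 * t)" for t
    using True by (simp add: algebra_simps)
  have e2: "2 * l1 * exp (l1 * t) + l1 * l1 * t * exp (l1 * t) = l2 * (exp (l1 * t) + l1 * t * exp (l1 * t)) + l1 * exp (l1 * t)" for t
    using True by (simp add: algebra_simps)
  show ?thesis
    by (rule exI[of _ "\<lambda>t. t * exp (l1 * t)"], rule exI[of _ "\<lambda>t. exp (l1 * t) + l1 * t * exp (l1 * t)"],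
           rule exI[of _ "\<lambda>t. 2 * l1 * exp (l1 * t) + l1 * l1 * t * exp (l1 * t)"])
      (use d1 d2 c e1 e2 in blast)
next
  case False
  hence d: "l1 - l2 \<noteq> 0" by simp
  have d1: "((\<lambda>t. exp (l1 * t) / (l1 - l2)) has_real_derivative (l1 * exp (l1 * t) / (l1 - l2))) (at t)" for t
    using d by (auto intro!: derivative_eq_intros)
  have d2: "((\<lambda>t. l1 * exp (l1 * t) / (l1 - l2)) has_real_derivative (l1 * l1 * exp (l1 * t) / (l1 - l2))) (at t)" for t
    using d by (auto intro!: derivative_eq_intros)
  have c: "continuous_on UNIV (\<lambda>t. l1 * l1 * exp (l1 * t) / (l1 - l2))"
    using d by (intro continuous_intros) auto
  have e1: "l1 * exp (l1 * t) / (l1 - l2) = l2 * (exp (l1 * t) / (l1 - l2)) + exp (l1 * t)" for t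
    using d by (simp add: field_simps)
  have e2: "l1 * l1 * exp (l1 * t) / (l1 - l2) = l2 * (l1 * exp (l1 * t) / (l1 - l2)) + l1 * exp (l1 * t)" for t
    using d by (simp add: field_simps)
  show ?thesis
    by (rule exI[of _ "\<lambda>t. exp (l1 * t) / (l1 - l2)"], rule exI[of _ "\<lambda>t. l1 * exp (l1 * t) / (l1 - l2)"],
           rule exI[of _ "\<lambda>t. l1 * l1 * exp (l1 * t) / (l1 - l2)"])
      (use d1 d2 c e1 e2 in blast)
qed



lemma vd_scal:
  assumes "(f has_real_derivative f') (at t)"
  shows "((\<lambda>t. f t *\<^sub>R (c :: 'a::real_normed_vector)) has_vector_derivative f' *\<^sub>R c) (at t)"
  using has_vector_derivative_scaleR[OF assms has_vector_derivative_const[of c]] by simp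

lemma vd_cscal:
  assumes "(f has_vector_derivative f') (at t)"
  shows "((\<lambda>t. (r::real) *\<^sub>R f t) has_vector_derivative r *\<^sub>R f') (at t)"
  by (rule bounded_linear.has_vector_derivative[OF bounded_linear_scaleR_right assms])

lemma exist_part:
  fixes N :: "complex^'n \<Rightarrow> real" and \<xi> \<xi>1 \<xi>2 :: "real \<Rightarrow> complex^'n"
  assumes N: "is_norm_on N" and a0: "a0 \<noteq> 0" and l1: "l1 \<noteq> 0" and l2: "l2 \<noteq> 0"
    and A2: "a2 = a0 * l1 * l2" and A1: "a1 = - a0 * (l1 + l2)"
    and C: "C2_on UNIV \<xi> \<xi>1 \<xi>2"
    and R: "\<And>t. N (a0 *\<^sub>R \<xi>2 t + a1 *\<^sub>R \<xi>1 t + a2 *\<^sub>R \<xi> t) \<le> \<epsilon>"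
  shows "\<exists>x x1 x2. C2_on UNIV x x1 x2 \<and> (\<forall>t. a0 *\<^sub>R x2 t + a1 *\<^sub>R x1 t + a2 *\<^sub>R x t = 0)
            \<and> (\<forall>t. N (\<xi> t - x t) \<le> 1 / \<bar>a0 * l1 * l2\<bar> * \<epsilon>)"
proof -
  have d0: "\<And>t. (\<xi> has_vector_derivative \<xi>1 t) (at t)" and d1: "\<And>t. (\<xi>1 has_vector_derivative \<xi>2 t) (at t)"
    using C unfolding C2_on_def by auto
  define \<eta> where "\<eta> t = \<xi>1 t - l2 *\<^sub>R \<xi> t" for t
  have d\<eta>: "(\<eta> has_vector_derivative (\<xi>2 t - l2 *\<^sub>R \<xi>1 t)) (at t)" for t
    unfolding \<eta>_def by (intro has_vector_derivative_diff d1 vd_cscal d0)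
  have key: "a0 *\<^sub>R ((\<xi>2 t - l2 *\<^sub>R \<xi>1 t) - l1 *\<^sub>R \<eta> t) = a0 *\<^sub>R \<xi>2 t + a1 *\<^sub>R \<xi>1 t + a2 *\<^sub>R \<xi> t" for t
    by (simp add: \<eta>_def A1 A2 algebra_simps)
  have b1: "N ((\<xi>2 t - l2 *\<^sub>R \<xi>1 t) - l1 *\<^sub>R \<eta> t) \<le> \<epsilon> / \<bar>a0\<bar>" for t
  proof -
    have "\<bar>a0\<bar> * N ((\<xi>2 t - l2 *\<^sub>R \<xi>1 t) - l1 *\<^sub>R \<eta> t) \<le> \<epsilon>"
      using R[of t] key[of t] N_scaleR[OF N, of a0] by metis
    thus ?thesis using a0 by (simp add: field_simps)
  qed
  obtain c1 where c1: "\<And>t. N (\<eta> t - exp (l1 * t) *\<^sub>R c1) \<le> \<epsilon> / \<bar>a0\<bar> / \<bar>l1\<bar>"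
    using first_order[OF N l1 d\<eta> b1] by blast
  obtain \<phi> \<phi>1 \<phi>2 where \<phi>: "\<And>t. (\<phi> has_real_derivative \<phi>1 t) (at t)" "\<And>t. (\<phi>1 has_real_derivative \<phi>2 t) (at t)"
     "continuous_on UNIV \<phi>2" "\<And>t. \<phi>1 t = l2 * \<phi> t + exp (l1 * t)"
     "\<And>t. \<phi>2 t = l2 * \<phi>1 t + l1 * exp (l1 * t)"
    using phi_exists[of l2 l1] by blast
  define u where "u t = \<xi> t - \<phi> t *\<^sub>R c1" for t
  have du: "(u has_vector_derivative (\<xi>1 t - \<phi>1 t *\<^sub>R c1)) (at t)" for t
    unfolding u_def by (intro has_vector_derivative_diff d0 vd_scal \<phi>(1))
  have b2: "N ((\<xi>1 t - \<phi>1 t *\<^sub>R c1) - l2 *\<^sub>R u t) \<le> \<epsilon> / \<bar>a0\<bar> / \<bar>l1\<bar>" for t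
  proof -
    have "(\<xi>1 t - \<phi>1 t *\<^sub>R c1) - l2 *\<^sub>R u t = \<eta> t - exp (l1 * t) *\<^sub>R c1"
      by (simp add: u_def \<eta>_def \<phi>(4) algebra_simps)
    thus ?thesis using c1 by simp
  qed
  obtain c2 where c2: "\<And>t. N (u t - exp (l2 * t) *\<^sub>R c2) \<le> \<epsilon> / \<bar>a0\<bar> / \<bar>l1\<bar> / \<bar>l2\<bar>"
    using first_order[OF N l2 du b2] by blast
  define x where "x t = \<phi> t *\<^sub>R c1 + exp (l2 * t) *\<^sub>R c2" for t
  define x1 where "x1 t = \<phi>1 t *\<^sub>R c1 + (l2 * exp (l2 * t)) *\<^sub>R c2" for t
  define x2 where "x2 t = \<phi>2 t *\<^sub>R c1 + (l2 * (l2 * exp (l2 * t))) *\<^sub>R c2" for t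
  have e1: "((\<lambda>t. exp (l2 * t)) has_real_derivative l2 * exp (l2 * t)) (at t)" for t
    by (auto intro!: derivative_eq_intros)
  have e2: "((\<lambda>t. l2 * exp (l2 * t)) has_real_derivative l2 * (l2 * exp (l2 * t))) (at t)" for t
    by (auto intro!: derivative_eq_intros)
  have "C2_on UNIV x x1 x2"
    unfolding C2_on_def
  proof (intro conjI ballI)
    fix t :: real
    show "(x has_vector_derivative x1 t) (at t within UNIV)"
      unfolding x_def x1_def by (intro has_vector_derivative_add vd_scal \<phi>(1) e1)
    show "(x1 has_vector_derivative x2 t) (at t within UNIV)"
      unfolding x1_def x2_def by (intro has_vector_derivative_add vd_scal \<phi>(2) e2)
  next
    show "continuous_on UNIV x2" unfolding x2_def by (intro continuous_intros \<phi>(3))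
  qed
  moreover have "a0 *\<^sub>R x2 t + a1 *\<^sub>R x1 t + a2 *\<^sub>R x t = 0" for t
  proof -
    have k1: "a0 * \<phi>2 t + a1 * \<phi>1 t + a2 * \<phi> t = 0"
      unfolding A1 A2 \<phi>(5) \<phi>(4) by (simp add: algebra_simps)
    have k2: "a0 * (l2 * (l2 * exp (l2 * t))) + a1 * (l2 * exp (l2 * t)) + a2 * exp (l2 * t) = 0"
      unfolding A1 A2 by (simp add: algebra_simps)
    have "a0 *\<^sub>R x2 t + a1 *\<^sub>R x1 t + a2 *\<^sub>R x t
       = (a0 * \<phi>2 t + a1 * \<phi>1 t + a2 * \<phi> t) *\<^sub>R c1
         + (a0 * (l2 * (l2 * exp (l2 * t))) + a1 * (l2 * exp (l2 * t)) + a2 * exp (l2 * t)) *\<^sub>R c2"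
      unfolding x_def x1_def x2_def by (simp add: scaleR_add_right scaleR_add_left)
    thus ?thesis using k1 k2 by simp
  qed
  moreover have "N (\<xi> t - x t) \<le> 1 / \<bar>a0 * l1 * l2\<bar> * \<epsilon>" for t
  proof -
    have "\<xi> t - x t = u t - exp (l2 * t) *\<^sub>R c2" by (simp add: u_def x_def)
    hence "N (\<xi> t - x t) \<le> \<epsilon> / \<bar>a0\<bar> / \<bar>l1\<bar> / \<bar>l2\<bar>" using c2[of t] by simp
    also have "\<epsilon> / \<bar>a0\<bar> / \<bar>l1\<bar> / \<bar>l2\<bar> = 1 / \<bar>a0 * l1 * l2\<bar> * \<epsilon>" by (simp add: abs_mult)
    finally show ?thesis .
  qed
  ultimately show ?thesis by blast
qed



lemma N_lower_sum: "is_norm_on N \<Longrightarrow> N a - N b \<le> N (a + b)"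
  using N_tri[of N "a + b" "- b"] N_minus[of N b] by simp

lemma sgn_mul: "(l::real) \<noteq> 0 \<Longrightarrow> l * (sgn l * s) = \<bar>l\<bar> * s"
  by (simp add: sgn_if)

lemma opp_case:
  fixes x :: "real \<Rightarrow> complex^'n"
  assumes N: "is_norm_on N" and l1: "l1 > 0" and l2: "l2 < 0"
    and xf: "\<And>t. x t = exp (l1 * t) *\<^sub>R p + exp (l2 * t) *\<^sub>R q"
    and bd: "\<And>t. N (x t) \<le> M" and \<eta>: "\<eta> > 0"
  shows "\<exists>t. N (x t) < \<eta>"
proof -
  have M0: "M \<ge> 0" using bd[of 0] N_nonneg[OF N, of "x 0"] by linarith
  have p0: "p = 0"
  proof (rule ccontr)
    assume "p \<noteq> 0"
    hence Np: "N p > 0" using N_zero[OF N, of p] N_nonneg[OF N, of p] by linarith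
    define t0 where "t0 = (M + N q) / (l1 * N p)"
    have t00: "t0 \<ge> 0" unfolding t0_def using M0 N_nonneg[OF N, of q] Np l1 by simp
    have "exp (l2 * t0) \<le> 1" using t00 l2 by (simp add: mult_nonpos_nonneg mult.commute)
    hence q1: "exp (l2 * t0) * N q \<le> N q" using N_nonneg[OF N, of q] by (simp add: mult_left_le_one_le)
    have "l1 * t0 < exp (l1 * t0)" using exp_ge_add_one_self[of "l1 * t0"] by linarith
    hence "l1 * t0 * N p < exp (l1 * t0) * N p" using Np by simp
    moreover have "l1 * t0 * N p = M + N q" unfolding t0_def using l1 Np by simp
    ultimately have "M < exp (l1 * t0) * N p - exp (l2 * t0) * N q" using q1 by linarith
    also have "\<dots> \<le> N (x t0)"
      using N_lower_sum[OF N, of "exp (l1 * t0) *\<^sub>R p" "exp (l2 * t0) *\<^sub>R q"] N_scaleR[OF N] xf[of t0] by simp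
    finally show False using bd[of t0] by simp
  qed
  obtain T where T: "T \<ge> 0" "\<And>s. s \<ge> T \<Longrightarrow> exp (- \<bar>l2\<bar> * s) * N q < \<eta>"
    using small_exp[of l2 "N q" \<eta>] l2 N_nonneg[OF N, of q] \<eta> by auto
  have "N (x T) = exp (l2 * T) * N q" using xf[of T] p0 N_scaleR[OF N] by simp
  also have "\<dots> = exp (- \<bar>l2\<bar> * T) * N q" using l2 by simp
  also have "\<dots> < \<eta>" using T by simp
  finally show ?thesis by blast
qed

lemma two_exp:
  fixes x :: "real \<Rightarrow> complex^'n"
  assumes N: "is_norm_on N" and l1: "l1 \<noteq> 0" and l2: "l2 \<noteq> 0"
    and xf: "\<And>t. x t = exp (l1 * t) *\<^sub>R p + exp (l2 * t) *\<^sub>R q"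
    and bd: "\<And>t. N (x t) \<le> M" and \<eta>: "\<eta> > 0"
  shows "\<exists>t. N (x t) < \<eta>"
proof -
  consider "l1 > 0" "l2 < 0" | "l1 < 0" "l2 > 0" | "sgn l1 = sgn l2"
    using l1 l2 by (cases "l1 > 0"; cases "l2 > 0") (auto simp: sgn_if)
  then show ?thesis
  proof cases
    case 1 thus ?thesis using opp_case[OF N _ _ xf bd \<eta>] by blast
  next
    case 2
    have xf': "x t = exp (l2 * t) *\<^sub>R q + exp (l1 * t) *\<^sub>R p" for t using xf[of t] by (simp add: add.commute)
    show ?thesis using opp_case[OF N _ _ xf' bd \<eta>] 2 by blast
  next
    case 3
    define \<sigma> where "\<sigma> = sgn l1"
    have h2: "\<eta> / 2 > 0" using \<eta> by simp
    obtain T1 where T1: "T1 \<ge> 0" "\<And>s. s \<ge> T1 \<Longrightarrow> exp (- \<bar>l1\<bar> * s) * N p < \<eta> / 2"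
      using small_exp[OF l1 N_nonneg[OF N, of p] h2] by auto
    obtain T2 where T2: "T2 \<ge> 0" "\<And>s. s \<ge> T2 \<Longrightarrow> exp (- \<bar>l2\<bar> * s) * N q < \<eta> / 2"
      using small_exp[OF l2 N_nonneg[OF N, of q] h2] by auto
    define T where "T = max T1 T2"
    have e1: "l1 * (- \<sigma> * T) = - \<bar>l1\<bar> * T" using sgn_mul[OF l1, of T] by (simp add: \<sigma>_def)
    have e2: "l2 * (- \<sigma> * T) = - \<bar>l2\<bar> * T" using sgn_mul[OF l2, of T] 3 by (simp add: \<sigma>_def)
    have "N (x (- \<sigma> * T)) \<le> N (exp (l1 * (- \<sigma> * T)) *\<^sub>R p) + N (exp (l2 * (- \<sigma> * T)) *\<^sub>R q)"
      using xf N_tri[OF N] by simp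
    also have "\<dots> = exp (- \<bar>l1\<bar> * T) * N p + exp (- \<bar>l2\<bar> * T) * N q"
      unfolding e1 e2 using N_scaleR[OF N] by simp
    also have "\<dots> < \<eta> / 2 + \<eta> / 2" using T1(2)[of T] T2(2)[of T] by (intro add_strict_mono) (auto simp: T_def)
    finally show ?thesis by auto
  qed
qed

lemma dbl_case:
  fixes x :: "real \<Rightarrow> complex^'n"
  assumes N: "is_norm_on N" and l: "l \<noteq> 0"
    and xf: "\<And>t. x t = exp (l * t) *\<^sub>R (t *\<^sub>R c + d)"
    and bd: "\<And>t. N (x t) \<le> M" and \<eta>: "\<eta> > 0"
  shows "\<exists>t. N (x t) < \<eta>"
proof -
  define \<sigma> where "\<sigma> = sgn l"
  have c0: "c = 0"
  proof (rule ccontr)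
    assume "c \<noteq> 0"
    hence Nc: "N c > 0" using N_zero[OF N, of c] N_nonneg[OF N, of c] by linarith
    define s where "s = (M + N d + 1) / N c"
    have M0: "M \<ge> 0" using bd[of 0] N_nonneg[OF N, of "x 0"] by linarith
    have s0: "s \<ge> 0" unfolding s_def using M0 N_nonneg[OF N, of d] Nc by simp
    have e0: "l * (\<sigma> * s) = \<bar>l\<bar> * s" unfolding \<sigma>_def by (rule sgn_mul[OF l])
    have ex: "exp (l * (\<sigma> * s)) \<ge> 1" unfolding e0 using s0 by simp
    have sc: "N ((\<sigma> * s) *\<^sub>R c) = s * N c" using N_scaleR[OF N] s0 l by (simp add: \<sigma>_def abs_mult)
    have "M + 1 = s * N c - N d" unfolding s_def using Nc by simp
    also have "\<dots> \<le> N ((\<sigma> * s) *\<^sub>R c + d)" using N_lower_sum[OF N, of "(\<sigma> * s) *\<^sub>R c" d] sc by simp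
    also have "\<dots> \<le> exp (l * (\<sigma> * s)) * N ((\<sigma> * s) *\<^sub>R c + d)"
      using mult_right_mono[OF ex N_nonneg[OF N, of "(\<sigma> * s) *\<^sub>R c + d"]] by simp
    also have "\<dots> = N (x (\<sigma> * s))" using xf N_scaleR[OF N] by simp
    finally show False using bd[of "\<sigma> * s"] by simp
  qed
  obtain T where T: "T \<ge> 0" "\<And>s. s \<ge> T \<Longrightarrow> exp (- \<bar>l\<bar> * s) * N d < \<eta>"
    using small_exp[OF l N_nonneg[OF N, of d] \<eta>] by auto
  have e: "l * (- \<sigma> * T) = - \<bar>l\<bar> * T" using sgn_mul[OF l, of T] by (simp add: \<sigma>_def)
  have "N (x (- \<sigma> * T)) = exp (- \<bar>l\<bar> * T) * N d"
    using xf[of "- \<sigma> * T"] c0 N_scaleR[OF N] e by simp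
  also have "\<dots> < \<eta>" using T by simp
  finally show ?thesis by blast
qed



lemma small_sol:
  fixes x x1 x2 :: "real \<Rightarrow> complex^'n"
  assumes N: "is_norm_on N" and a0: "a0 \<noteq> 0" and l1: "l1 \<noteq> 0" and l2: "l2 \<noteq> 0"
    and A2: "a2 = a0 * l1 * l2" and A1: "a1 = - a0 * (l1 + l2)"
    and C: "C2_on UNIV x x1 x2"
    and ode: "\<And>t. a0 *\<^sub>R x2 t + a1 *\<^sub>R x1 t + a2 *\<^sub>R x t = 0"
    and bd: "\<And>t. N (x t) \<le> M" and \<eta>: "\<eta> > 0"
  shows "\<exists>t. N (x t) < \<eta>"
proof -
  have d0: "\<And>t. (x has_vector_derivative x1 t) (at t)" and d1: "\<And>t. (x1 has_vector_derivative x2 t) (at t)"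
    using C unfolding C2_on_def by auto
  have x2e: "x2 t = (l1 + l2) *\<^sub>R x1 t - (l1 * l2) *\<^sub>R x t" for t
  proof -
    have "a0 *\<^sub>R (x2 t - ((l1 + l2) *\<^sub>R x1 t - (l1 * l2) *\<^sub>R x t)) = a0 *\<^sub>R x2 t + a1 *\<^sub>R x1 t + a2 *\<^sub>R x t"
      by (simp add: A1 A2 algebra_simps)
    also have "\<dots> = 0" by (rule ode)
    finally show ?thesis using a0 by simp
  qed
  have gen: "(x1 t - lb *\<^sub>R x t) = exp (la * t) *\<^sub>R (x1 0 - lb *\<^sub>R x 0)"
    if "la + lb = l1 + l2" "la * lb = l1 * l2" for la lb t
  proof (rule expo_unique[where y = "\<lambda>t. x1 t - lb *\<^sub>R x t"])
    fix t
    have "((\<lambda>t. x1 t - lb *\<^sub>R x t) has_vector_derivative (x2 t - lb *\<^sub>R x1 t)) (at t)"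
      by (intro has_vector_derivative_diff d1 vd_cscal d0)
    moreover have "x2 t - lb *\<^sub>R x1 t = la *\<^sub>R (x1 t - lb *\<^sub>R x t)"
      unfolding x2e that[symmetric] by (simp add: algebra_simps)
    ultimately show "((\<lambda>t. x1 t - lb *\<^sub>R x t) has_vector_derivative la *\<^sub>R (x1 t - lb *\<^sub>R x t)) (at t)" by simp
  qed
  define p0 where "p0 = x1 0 - l2 *\<^sub>R x 0"
  define q0 where "q0 = x1 0 - l1 *\<^sub>R x 0"
  have y1: "x1 t - l2 *\<^sub>R x t = exp (l1 * t) *\<^sub>R p0" for t using gen[of l1 l2 t] by (simp add: p0_def)
  have y2: "x1 t - l1 *\<^sub>R x t = exp (l2 * t) *\<^sub>R q0" for t using gen[of l2 l1 t] by (simp add: q0_def add.commute mult.commute)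
  show ?thesis
  proof (cases "l1 = l2")
    case False
    hence dd: "l1 - l2 \<noteq> 0" by simp
    have xf: "x t = exp (l1 * t) *\<^sub>R ((1 / (l1 - l2)) *\<^sub>R p0) + exp (l2 * t) *\<^sub>R ((- 1 / (l1 - l2)) *\<^sub>R q0)" for t
    proof -
      have "(l1 - l2) *\<^sub>R x t = exp (l1 * t) *\<^sub>R p0 - exp (l2 * t) *\<^sub>R q0"
        using y1[of t] y2[of t] by (simp add: algebra_simps)
      hence "x t = (1 / (l1 - l2)) *\<^sub>R (exp (l1 * t) *\<^sub>R p0 - exp (l2 * t) *\<^sub>R q0)"
        using dd by (metis scaleR_scaleR divide_self_if mult.commute times_divide_eq_right mult_1 scaleR_one)
      thus ?thesis by (simp add: algebra_simps)
    qed
    show ?thesis using two_exp[OF N l1 l2 xf bd \<eta>] .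
  next
    case True
    define g where "g t = exp (- l1 * t) *\<^sub>R x t - t *\<^sub>R p0" for t
    have "(g has_vector_derivative 0) (at t within UNIV)" for t
    proof -
      have e: "((\<lambda>t. exp (- l1 * t)) has_real_derivative exp (- l1 * t) * (- l1)) (at t)"
        by (auto intro!: derivative_eq_intros)
      have "(g has_vector_derivative (exp (- l1 * t) *\<^sub>R x1 t + (exp (- l1 * t) * (- l1)) *\<^sub>R x t - 1 *\<^sub>R p0)) (at t)"
        unfolding g_def by (intro has_vector_derivative_diff has_vector_derivative_scaleR[OF e d0] vd_scal) (rule DERIV_ident)
      moreover have "exp (- l1 * t) *\<^sub>R x1 t + (exp (- l1 * t) * (- l1)) *\<^sub>R x t - 1 *\<^sub>R p0 = 0"
      proof -
        have "exp (- l1 * t) *\<^sub>R x1 t + (exp (- l1 * t) * (- l1)) *\<^sub>R x t = exp (- l1 * t) *\<^sub>R (x1 t - l2 *\<^sub>R x t)"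
          using True by (simp add: algebra_simps)
        also have "\<dots> = (exp (- l1 * t) * exp (l1 * t)) *\<^sub>R p0" using y1 by simp
        also have "exp (- l1 * t) * exp (l1 * t) = 1" by (simp add: exp_add[symmetric])
        finally show ?thesis by simp
      qed
      ultimately show ?thesis by simp
    qed
    then obtain d where gd: "\<And>t. g t = d" using has_vector_derivative_zero_constant[of UNIV g] by auto
    have xf: "x t = exp (l1 * t) *\<^sub>R (t *\<^sub>R p0 + d)" for t
    proof -
      have "exp (l1 * t) * exp (- l1 * t) = 1" by (simp add: exp_add[symmetric])
      hence "exp (l1 * t) *\<^sub>R g t = x t - exp (l1 * t) *\<^sub>R (t *\<^sub>R p0)"
        by (simp add: g_def scaleR_diff_right)
      thus ?thesis using gd[of t] by (simp add: scaleR_add_right)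
    qed
    show ?thesis using dbl_case[OF N l1 xf bd \<eta>] .
  qed
qed

lemma opt_part:
  fixes N :: "complex^'n \<Rightarrow> real"
  assumes N: "is_norm_on N" and a0: "a0 \<noteq> 0" and l1: "l1 \<noteq> 0" and l2: "l2 \<noteq> 0"
    and A2: "a2 = a0 * l1 * l2" and A1: "a1 = - a0 * (l1 + l2)"
    and L: "L < 1 / \<bar>a0 * l1 * l2\<bar>"
  shows "\<not> is_ulam_constant N (\<lambda>_. of_real a0) (\<lambda>_. of_real a1) (\<lambda>_. of_real a2) (\<lambda>_. 0) UNIV L"
proof
  assume U: "is_ulam_constant N (\<lambda>_. of_real a0) (\<lambda>_. of_real a1) (\<lambda>_. of_real a2) (\<lambda>_. 0) UNIV L"
  have a2: "a2 \<noteq> 0" using A2 a0 l1 l2 by simp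
  define z0 :: "complex^'n" where "z0 = (\<chi> i. 1)"
  have "z0 \<noteq> 0" by (simp add: z0_def vec_eq_iff)
  hence Nz: "N z0 > 0" using N_zero[OF N, of z0] N_nonneg[OF N, of z0] by linarith
  define e0 where "e0 = (1 / (\<bar>a2\<bar> * N z0)) *\<^sub>R z0"
  have Ne: "N e0 = 1 / \<bar>a2\<bar>" unfolding e0_def using N_scaleR[OF N] Nz a2 by simp
  have C: "C2_on UNIV (\<lambda>t. e0) (\<lambda>t. 0) (\<lambda>t. 0)" unfolding C2_on_def by auto
  have res: "\<forall>t\<in>UNIV. N ((\<lambda>_. complex_of_real a0) t *s (\<lambda>t. 0) t + (\<lambda>_. complex_of_real a1) t *s (\<lambda>t. 0) t
        + (\<lambda>_. complex_of_real a2) t *s (\<lambda>t. e0) t - (\<lambda>_. 0) t) \<le> 1"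
    using Ne N_scaleR[OF N, of a2 e0] a2 by (simp add: smul_real)
  obtain x x1 x2 where x: "C2_on UNIV x x1 x2"
    "\<forall>t\<in>UNIV. complex_of_real a0 *s x2 t + complex_of_real a1 *s x1 t + complex_of_real a2 *s x t = 0"
    "\<forall>t\<in>UNIV. N (e0 - x t) \<le> L * 1"
    using U C res unfolding is_ulam_constant_def by (metis zero_less_one)
  have ode: "a0 *\<^sub>R x2 t + a1 *\<^sub>R x1 t + a2 *\<^sub>R x t = 0" for t using x(2) by (simp add: smul_real)
  have bd: "N (x t) \<le> N e0 + L" for t
  proof -
    have "N (x t) \<le> N e0 + N (- (e0 - x t))" using N_tri[OF N, of e0 "- (e0 - x t)"] by simp
    thus ?thesis using x(3) N_minus[OF N] by (metis add_left_mono mult_1_right order_trans UNIV_I)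
  qed
  have "N e0 - L > 0" using L Ne A2 by simp
  then obtain t where t: "N (x t) < N e0 - L" using small_sol[OF N a0 l1 l2 A2 A1 x(1) ode bd] by blast
  have "N e0 - N (x t) \<le> N (e0 - x t)" by (rule N_rev[OF N])
  moreover have "N (e0 - x t) \<le> L" using x(3) by simp
  ultimately show False using t by linarith
qed


theorem corollary4p2:
  fixes N :: "complex ^ 'n \<Rightarrow> real" and a0 a1 a2 l1 l2 :: real
  assumes "is_norm_on N"
    and "a0 \<noteq> 0"
    and "\<forall>z::complex. of_real a0 * z^2 + of_real a1 * z + of_real a2
                      = of_real a0 * (z - of_real l1) * (z - of_real l2)"
    and "l1 \<noteq> 0" and "l2 \<noteq> 0"
  shows "ulam_stable N (\<lambda>_. of_real a0) (\<lambda>_. of_real a1) (\<lambda>_. of_real a2) (\<lambda>_. 0) UNIV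
       \<and> is_min_ulam_constant N (\<lambda>_. of_real a0) (\<lambda>_. of_real a1) (\<lambda>_. of_real a2) (\<lambda>_. 0) UNIV
            (1 / \<bar>a0 * l1 * l2\<bar>)"
proof -
  note N = assms(1) and a0 = assms(2) and l1 = assms(4) and l2 = assms(5)
  note A2 = coeffs(1)[OF assms(3)] and A1 = coeffs(2)[OF assms(3)]
  have U: "is_ulam_constant N (\<lambda>_. of_real a0) (\<lambda>_. of_real a1) (\<lambda>_. of_real a2) (\<lambda>_. 0) UNIV
            (1 / \<bar>a0 * l1 * l2\<bar>)"
    unfolding is_ulam_constant_def
  proof (intro conjI allI impI)
    show "0 < 1 / \<bar>a0 * l1 * l2\<bar>" using a0 l1 l2 by simp
    fix \<epsilon> :: real and \<xi> \<xi>1 \<xi>2 :: "real \<Rightarrow> complex^'n"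
    assume h: "C2_on UNIV \<xi> \<xi>1 \<xi>2 \<and> (\<forall>t\<in>UNIV. N ((\<lambda>_. complex_of_real a0) t *s \<xi>2 t + (\<lambda>_. complex_of_real a1) t *s \<xi>1 t + (\<lambda>_. complex_of_real a2) t *s \<xi> t - (\<lambda>_. 0) t) \<le> \<epsilon>)"
    have R: "N (a0 *\<^sub>R \<xi>2 t + a1 *\<^sub>R \<xi>1 t + a2 *\<^sub>R \<xi> t) \<le> \<epsilon>" for t
      using h by (simp add: smul_real)
    obtain x x1 x2 where x: "C2_on UNIV x x1 x2" "\<And>t. a0 *\<^sub>R x2 t + a1 *\<^sub>R x1 t + a2 *\<^sub>R x t = 0"
        "\<And>t. N (\<xi> t - x t) \<le> 1 / \<bar>a0 * l1 * l2\<bar> * \<epsilon>"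
      using exist_part[OF N a0 l1 l2 A2 A1 conjunct1[OF h] R] by blast
    show "\<exists>x x1 x2. C2_on UNIV x x1 x2 \<and>
           (\<forall>t\<in>UNIV. (\<lambda>_. complex_of_real a0) t *s x2 t + (\<lambda>_. complex_of_real a1) t *s x1 t + (\<lambda>_. complex_of_real a2) t *s x t = (\<lambda>_. 0) t) \<and>
           (\<forall>t\<in>UNIV. N (\<xi> t - x t) \<le> 1 / \<bar>a0 * l1 * l2\<bar> * \<epsilon>)"
      using x by (auto simp: smul_real)
  qed
  have "\<forall>L<1 / \<bar>a0 * l1 * l2\<bar>. \<not> is_ulam_constant N (\<lambda>_. of_real a0) (\<lambda>_. of_real a1) (\<lambda>_. of_real a2) (\<lambda>_. 0) UNIV L"
    using opt_part[OF N a0 l1 l2 A2 A1] by blast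
  thus ?thesis using U unfolding ulam_stable_def is_min_ulam_constant_def by blast
qed

end
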